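(* Let $(M,g)$ be an $n$-dimensional Riemannian manifold, let $V$ be a torqued vector field, i.e. $\nabla_X V=aX+\psi(X)V$ for all $X\in\chi(M)$ with $a$ a smooth function, $\psi$ a $1$-form and $\psi(V)=0$ ($\nabla$ the Levi-Civita connection), and let $\eta$ be the $g$-dual $1$-form of $V$. Suppose $M$ is a mixed generalized quasi-Einstein manifold whose Ricci tensor is of the form $\mathrm{Ric}=\alpha g+\beta\,\eta\otimes\eta+\gamma(\eta\otimes\psi+\psi\otimes\eta)$ for smooth functions $\alpha,\beta,\gamma$. If $(V,\lambda,\mu)$ is an almost $\eta$-Yamabe soliton on $(M,g)$, then $$\lambda=\Big(\beta+\frac{\mu}{n}\Big)|V|^2+\alpha n-a.$$
   Context: An almost $\eta$-Yamabe soliton $(V,\lambda,\mu)$ on $(M,g)$, for a given $1$-form $\eta$, consists of a vector field $V$ and smooth functions $\lambda,\mu$ on $M$ with $\frac12\pounds_V g=(\mathrm{scal}-\lambda)g+\mu\,\eta\otimes\eta$, where $\mathrm{scal}$ is the scalar curvature. A non-flat Riemannian manifold of dimension $\ge3$ with non-identically-zero Ricci tensor is mixed generalized quasi-Einstein if $\mathrm{Ric}=\alpha g+\beta A\otimes A+\gamma B\otimes B+\delta(A\otimes B+B\otimes A)$ for smooth functions $\alpha,\beta,\gamma,\delta$ and $1$-forms $A,B$ with $g$-orthogonal $g$-dual vector fields. *)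

theory Defs
  imports "HOL-Analysis.Analysis"
begin

text \<open>Local-coordinate Riemannian geometry on an open set U of R^n
  (points are real^'n, coordinate indices range over the finite type 'n).\<close>

definition pd :: "'n::finite \<Rightarrow> (real^'n \<Rightarrow> real) \<Rightarrow> real^'n \<Rightarrow> real" where
  "pd i f x = deriv (\<lambda>t. f (x + t *\<^sub>R axis i 1)) 0"

fun Ck_on :: "nat \<Rightarrow> (real^'n::finite) set \<Rightarrow> (real^'n \<Rightarrow> real) \<Rightarrow> bool" where
  "Ck_on 0 U f = continuous_on U f"
| "Ck_on (Suc k) U f = (f differentiable_on U \<and> (\<forall>i. Ck_on k U (pd i f)))"

definition smooth_fun :: "(real^'n::finite) set \<Rightarrow> (real^'n \<Rightarrow> real) \<Rightarrow> bool" where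
  "smooth_fun U f \<longleftrightarrow> (\<forall>k. Ck_on k U f)"

definition smooth_field :: "(real^'n::finite) set \<Rightarrow> (real^'n \<Rightarrow> real^'n) \<Rightarrow> bool" where
  "smooth_field U V \<longleftrightarrow> (\<forall>k. smooth_fun U (\<lambda>x. V x $ k))"

definition riemannian_metric :: "(real^'n::finite) set \<Rightarrow> (real^'n \<Rightarrow> real^'n^'n) \<Rightarrow> bool" where
  "riemannian_metric U g \<longleftrightarrow>
     (\<forall>i j. smooth_fun U (\<lambda>x. g x $ i $ j)) \<and>
     (\<forall>x\<in>U. transpose (g x) = g x \<and> (\<forall>v. v \<noteq> 0 \<longrightarrow> v \<bullet> (g x *v v) > 0))"

definition ginv :: "(real^'n::finite \<Rightarrow> real^'n^'n) \<Rightarrow> real^'n \<Rightarrow> real^'n^'n" where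
  "ginv g x = matrix_inv (g x)"

definition christoffel :: "(real^'n::finite \<Rightarrow> real^'n^'n) \<Rightarrow> 'n \<Rightarrow> 'n \<Rightarrow> 'n \<Rightarrow> real^'n \<Rightarrow> real" where
  "christoffel g k i j x = (1/2) * (\<Sum>l\<in>UNIV. ginv g x $ k $ l *
      (pd i (\<lambda>y. g y $ j $ l) x + pd j (\<lambda>y. g y $ i $ l) x - pd l (\<lambda>y. g y $ i $ j) x))"

definition levi_civita :: "(real^'n::finite \<Rightarrow> real^'n^'n) \<Rightarrow> (real^'n \<Rightarrow> real^'n) \<Rightarrow> real^'n \<Rightarrow> real^'n \<Rightarrow> real^'n" where
  "levi_civita g V x v = (\<chi> k. \<Sum>i\<in>UNIV. v $ i *
      (pd i (\<lambda>y. V y $ k) x + (\<Sum>j\<in>UNIV. christoffel g k i j x * V x $ j)))"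

text \<open>Riemann tensor R^l_{ijk}: R(d_i,d_j)d_k = sum_l R^l_{ijk} d_l,
  R(X,Y) = nabla_X nabla_Y - nabla_Y nabla_X - nabla_[X,Y].\<close>
definition riemann :: "(real^'n::finite \<Rightarrow> real^'n^'n) \<Rightarrow> 'n \<Rightarrow> 'n \<Rightarrow> 'n \<Rightarrow> 'n \<Rightarrow> real^'n \<Rightarrow> real" where
  "riemann g l i j k x =
     pd i (christoffel g l j k) x - pd j (christoffel g l i k) x
     + (\<Sum>m\<in>UNIV. christoffel g l i m x * christoffel g m j k x
                 - christoffel g l j m x * christoffel g m i k x)"

definition ricci :: "(real^'n::finite \<Rightarrow> real^'n^'n) \<Rightarrow> 'n \<Rightarrow> 'n \<Rightarrow> real^'n \<Rightarrow> real" where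
  "ricci g j k x = (\<Sum>i\<in>UNIV. riemann g i i j k x)"

definition scal :: "(real^'n::finite \<Rightarrow> real^'n^'n) \<Rightarrow> real^'n \<Rightarrow> real" where
  "scal g x = (\<Sum>j\<in>UNIV. \<Sum>k\<in>UNIV. ginv g x $ j $ k * ricci g j k x)"

definition flat :: "(real^'n::finite \<Rightarrow> real^'n^'n) \<Rightarrow> (real^'n \<Rightarrow> real^'n) \<Rightarrow> real^'n \<Rightarrow> real^'n" where
  "flat g V x = g x *v V x"

definition sharp :: "(real^'n::finite \<Rightarrow> real^'n^'n) \<Rightarrow> (real^'n \<Rightarrow> real^'n) \<Rightarrow> real^'n \<Rightarrow> real^'n" where
  "sharp g A x = ginv g x *v A x"

definition lie_metric :: "(real^'n::finite \<Rightarrow> real^'n^'n) \<Rightarrow> (real^'n \<Rightarrow> real^'n) \<Rightarrow> real^'n \<Rightarrow> real^'n^'n" where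
  "lie_metric g V x = (\<chi> i j. \<Sum>k\<in>UNIV.
      V x $ k * pd k (\<lambda>y. g y $ i $ j) x
      + g x $ k $ j * pd i (\<lambda>y. V y $ k) x
      + g x $ i $ k * pd j (\<lambda>y. V y $ k) x)"

definition torqued :: "(real^'n::finite) set \<Rightarrow> (real^'n \<Rightarrow> real^'n^'n) \<Rightarrow> (real^'n \<Rightarrow> real^'n)
    \<Rightarrow> (real^'n \<Rightarrow> real) \<Rightarrow> (real^'n \<Rightarrow> real^'n) \<Rightarrow> bool" where
  "torqued U g V a \<psi> \<longleftrightarrow> smooth_field U V \<and> smooth_fun U a \<and> smooth_field U \<psi> \<and>
     (\<forall>x\<in>U. \<forall>v. levi_civita g V x v = a x *\<^sub>R v + (\<psi> x \<bullet> v) *\<^sub>R V x) \<and>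
     (\<forall>x\<in>U. \<psi> x \<bullet> V x = 0)"

definition mixed_gen_quasi_einstein :: "(real^'n::finite) set \<Rightarrow> (real^'n \<Rightarrow> real^'n^'n) \<Rightarrow> bool" where
  "mixed_gen_quasi_einstein U g \<longleftrightarrow>
     CARD('n) \<ge> 3 \<and>
     (\<exists>x\<in>U. \<exists>l i j k. riemann g l i j k x \<noteq> 0) \<and>
     (\<exists>x\<in>U. \<exists>i j. ricci g i j x \<noteq> 0) \<and>
     (\<exists>\<alpha> \<beta> \<gamma> \<delta> A B. smooth_fun U \<alpha> \<and> smooth_fun U \<beta> \<and> smooth_fun U \<gamma> \<and> smooth_fun U \<delta> \<and>
        smooth_field U A \<and> smooth_field U B \<and>
        (\<forall>x\<in>U. sharp g A x \<bullet> (g x *v sharp g B x) = 0) \<and>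
        (\<forall>x\<in>U. \<forall>i j. ricci g i j x = \<alpha> x * g x $ i $ j + \<beta> x * (A x $ i * A x $ j)
            + \<gamma> x * (B x $ i * B x $ j) + \<delta> x * (A x $ i * B x $ j + B x $ i * A x $ j)))"

definition almost_eta_yamabe :: "(real^'n::finite) set \<Rightarrow> (real^'n \<Rightarrow> real^'n^'n) \<Rightarrow> (real^'n \<Rightarrow> real^'n)
    \<Rightarrow> (real^'n \<Rightarrow> real^'n) \<Rightarrow> (real^'n \<Rightarrow> real) \<Rightarrow> (real^'n \<Rightarrow> real) \<Rightarrow> bool" where
  "almost_eta_yamabe U g \<eta> V lam \<mu> \<longleftrightarrow> smooth_field U V \<and> smooth_fun U lam \<and> smooth_fun U \<mu> \<and>
     (\<forall>x\<in>U. \<forall>i j. (1/2) * lie_metric g V x $ i $ j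
         = (scal g x - lam x) * g x $ i $ j + \<mu> x * (\<eta> x $ i * \<eta> x $ j))"

end

theory Submission
  imports Defs
begin

lemma posdef_inv:
  fixes G :: "real^'n::finite^'n"
  assumes "\<forall>v. v \<noteq> 0 \<longrightarrow> v \<bullet> (G *v v) > 0"
  shows "G ** matrix_inv G = mat 1 \<and> matrix_inv G ** G = mat 1"
proof -
  have "\<forall>x. G *v x = 0 \<longrightarrow> x = 0" using assms by (metis inner_zero_right less_irrefl)
  then have "\<exists>B. B ** G = mat 1" using matrix_left_invertible_ker by blast
  then have "invertible G" using invertible_left_inverse by blast
  then show ?thesis unfolding invertible_def matrix_inv_def by (rule someI_ex)
qed

lemma inv_sym:
  fixes G H :: "real^'n::finite^'n"
  assumes "G ** H = mat 1" "H ** G = mat 1" "transpose G = G"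
  shows "transpose H = H"
proof -
  have "transpose H ** G = mat 1"
    by (metis assms(1,3) matrix_transpose_mul transpose_mat)
  then have "transpose H = transpose H ** (G ** H)" using assms by simp
  also have "\<dots> = H" by (simp add: matrix_mul_assoc \<open>transpose H ** G = mat 1\<close>)
  finally show ?thesis .
qed

lemma pd_cong:
  assumes "open U" "x \<in> U" "\<forall>y\<in>U. f y = h y"
  shows "pd i f x = pd i h x"
  unfolding pd_def
proof (rule deriv_cong_ev)
  have "((\<lambda>t. x + t *\<^sub>R axis i 1) \<longlongrightarrow> x + 0 *\<^sub>R axis i 1) (nhds 0)"
    by (intro tendsto_intros) (auto simp: tendsto_def eventually_nhds)
  then have "((\<lambda>t. x + t *\<^sub>R axis i 1) \<longlongrightarrow> x) (nhds (0::real))" by simp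
  then have "eventually (\<lambda>t. x + t *\<^sub>R axis i 1 \<in> U) (nhds (0::real))"
    using assms topological_tendstoD by blast
  then show "eventually (\<lambda>t. f (x + t *\<^sub>R axis i 1) = h (x + t *\<^sub>R axis i 1)) (nhds 0)"
    by (rule eventually_mono) (use assms in auto)
qed simp

lemma mm_entry:
  fixes G H :: "real^'n::finite^'n"
  assumes "G ** H = mat 1"
  shows "(\<Sum>k\<in>UNIV. G$j$k * H$k$l) = (if j = l then 1 else 0)"
proof -
  have "(G ** H)$j$l = (\<Sum>k\<in>UNIV. G$j$k * H$k$l)" by (simp add: matrix_matrix_mult_def)
  then show ?thesis using assms by (simp add: mat_def)
qed

lemma trace_comb:
  fixes G H :: "real^'n::finite^'n" and u w p q r s :: "real^'n"
  assumes "H ** G = mat 1" "transpose G = G"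
  shows "(\<Sum>i\<in>UNIV. \<Sum>j\<in>UNIV. H$i$j * (c * G$i$j + d * (u$i*w$j) + e*(p$i*q$j) + f*(r$i * s$j)))
     = c * real CARD('n) + d*(u\<bullet>(H*v w)) + e*(p\<bullet>(H*v q)) + f*(r\<bullet>(H*v s))"
proof -
  have tr: "(\<Sum>i\<in>UNIV. \<Sum>j\<in>UNIV. H$i$j * G$i$j) = real CARD('n)"
  proof -
    have "\<And>i j. G$i$j = G$j$i" using assms(2) by (metis transpose_def vec_lambda_beta)
    then have "(\<Sum>i\<in>UNIV. \<Sum>j\<in>UNIV. H$i$j * G$i$j) = (\<Sum>i\<in>UNIV. \<Sum>j\<in>UNIV. H$i$j * G$j$i)" by simp
    also have "\<dots> = (\<Sum>i\<in>(UNIV::'n set). (1::real))" using mm_entry[OF assms(1)] by simp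
    finally show ?thesis by simp
  qed
  have bil: "\<And>a b. (\<Sum>i\<in>UNIV. \<Sum>j\<in>UNIV. H$i$j * (a$i*b$j)) = a \<bullet> (H *v b)"
    by (simp add: inner_vec_def matrix_vector_mult_def sum_distrib_left mult_ac)
  have "(\<Sum>i\<in>UNIV. \<Sum>j\<in>UNIV. H$i$j * (c * G$i$j + d * (u$i*w$j) + e*(p$i*q$j) + f*(r$i * s$j)))
     = c * (\<Sum>i\<in>UNIV. \<Sum>j\<in>UNIV. H$i$j * G$i$j) + d * (\<Sum>i\<in>UNIV. \<Sum>j\<in>UNIV. H$i$j * (u$i*w$j))
      + e * (\<Sum>i\<in>UNIV. \<Sum>j\<in>UNIV. H$i$j * (p$i*q$j)) + f * (\<Sum>i\<in>UNIV. \<Sum>j\<in>UNIV. H$i$j * (r$i * s$j))"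
    by (simp add: sum.distrib sum_distrib_left algebra_simps)
  then show ?thesis by (simp add: tr bil)
qed

lemma delta_sum: "(\<Sum>l\<in>UNIV. (if j = l then 1 else 0) * f l) = (f (j::'a::finite)::real)"
proof -
  have "(\<Sum>l\<in>UNIV. (if j = l then 1 else 0) * f l) = (\<Sum>l\<in>UNIV. if j = l then f l else 0)"
    by (rule sum.cong) auto
  then show ?thesis by (simp add: sum.delta')
qed

lemma delta_sum2: "(\<Sum>l\<in>UNIV. (if l = j then 1 else 0) * f l) = (f (j::'a::finite)::real)"
proof -
  have "(\<Sum>l\<in>UNIV. (if l = j then 1 else 0) * f l) = (\<Sum>l\<in>UNIV. if l = j then f l else 0)"
    by (rule sum.cong) auto
  then show ?thesis by (simp add: sum.delta)
qed

lemma contract: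
  fixes H :: "real^'n::finite^'n"
  shows "(\<Sum>k\<in>UNIV. A k * (c * (\<Sum>l\<in>UNIV. H$k$l * E l))) = (\<Sum>l\<in>UNIV. (\<Sum>k\<in>UNIV. A k * H$k$l) * (c * E l))"
  by (simp add: sum_distrib_left sum_distrib_right mult_ac) (rule sum.swap)

lemma lie_torqued:
  fixes g :: "real^'n::finite \<Rightarrow> real^'n^'n" and V \<psi> :: "real^'n \<Rightarrow> real^'n" and a :: "real^'n \<Rightarrow> real"
  assumes U: "open U" and x: "x \<in> U"
    and gm: "riemannian_metric U g"
    and lc: "\<forall>v. levi_civita g V x v = a x *\<^sub>R v + (\<psi> x \<bullet> v) *\<^sub>R V x"
  shows "lie_metric g V x $ i $ j = 2 * a x * g x $ i $ j
            + \<psi> x $ i * flat g V x $ j + \<psi> x $ j * flat g V x $ i"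
proof -
  let ?G = "g x" let ?H = "ginv g x"
  let ?D = "\<lambda>l i j. pd l (\<lambda>y. g y $ i $ j) x"
  let ?\<Gamma> = "\<lambda>k i j. christoffel g k i j x"
  let ?P = "\<lambda>i k. pd i (\<lambda>y. V y $ k) x"
  have symU: "\<forall>y\<in>U. transpose (g y) = g y" using gm unfolding riemannian_metric_def by blast
  have T: "transpose (g y) $ i $ j = g y $ j $ i" for y i j by (simp add: transpose_def)
  have gs: "g y $ i $ j = g y $ j $ i" if "y \<in> U" for y i j
    using T[of y i j] symU that by simp
  have Gsym: "\<And>i j. ?G$i$j = ?G$j$i" using gs x by blast
  have Dsym: "\<And>l i j. ?D l i j = ?D l j i"
    by (rule pd_cong[OF U x]) (use gs in blast)
  have pdef: "\<forall>v. v \<noteq> 0 \<longrightarrow> v \<bullet> (?G *v v) > 0" using gm x unfolding riemannian_metric_def by blast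
  have GH: "?G ** ?H = mat 1" using posdef_inv[OF pdef] unfolding ginv_def by blast
  note GHe = mm_entry[OF GH]
  have B: "(\<Sum>k\<in>UNIV. ?G$k$j * ?\<Gamma> k i m) = 1/2 * (?D i m j + ?D m i j - ?D j i m)" for i j m
  proof -
    have "(\<Sum>k\<in>UNIV. ?G$k$j * ?\<Gamma> k i m)
       = (\<Sum>k\<in>UNIV. ?G$j$k * (1/2 * (\<Sum>l\<in>UNIV. ?H$k$l * (?D i m l + ?D m i l - ?D l i m))))"
      by (simp add: christoffel_def Gsym[of _ j])
    also have "\<dots> = (\<Sum>l\<in>UNIV. (\<Sum>k\<in>UNIV. ?G$j$k * ?H$k$l) * (1/2 * (?D i m l + ?D m i l - ?D l i m)))"
      by (rule contract)
    also have "\<dots> = 1/2 * (?D i m j + ?D m i j - ?D j i m)"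
      by (simp only: GHe delta_sum)
    finally show ?thesis .
  qed
  have Pform: "?P i k = a x * (if i = k then 1 else 0) + \<psi> x $ i * V x $ k - (\<Sum>m\<in>UNIV. ?\<Gamma> k i m * V x $ m)" for i k
  proof -
    have "levi_civita g V x (axis i 1) $ k = ?P i k + (\<Sum>m\<in>UNIV. ?\<Gamma> k i m * V x $ m)"
      unfolding levi_civita_def axis_def by (simp only: vec_lambda_beta delta_sum2)
    moreover have "levi_civita g V x (axis i 1) $ k = a x * (if i = k then 1 else 0) + \<psi> x $ i * V x $ k"
    proof -
      have "levi_civita g V x (axis i 1) = a x *\<^sub>R axis i 1 + (\<psi> x $ i) *\<^sub>R V x"
        using lc by (simp add: inner_axis)
      then show ?thesis by (auto simp: axis_def)
    qed
    ultimately show ?thesis by linarith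
  qed
  have S1: "(\<Sum>k\<in>UNIV. ?G$k$j * ?P i k) = a x * ?G$i$j + \<psi> x $ i * flat g V x $ j
      - (\<Sum>m\<in>UNIV. V x $ m * (\<Sum>k\<in>UNIV. ?G$k$j * ?\<Gamma> k i m))" for i j
  proof -
    have "(\<Sum>k\<in>UNIV. ?G$k$j * ?P i k) = (\<Sum>k\<in>UNIV. a x * (if i = k then ?G$k$j else 0) + \<psi> x $ i * (?G$j$k * V x $ k)
       - (\<Sum>m\<in>UNIV. V x $ m * (?G$k$j * ?\<Gamma> k i m)))"
      apply (rule sum.cong, simp)
      apply (simp only: Pform)
      apply (simp add: Gsym[of _ j] sum_distrib_left algebra_simps)
      done
    also have "\<dots> = a x * ?G$i$j + \<psi> x $ i * flat g V x $ j
      - (\<Sum>m\<in>UNIV. V x $ m * (\<Sum>k\<in>UNIV. ?G$k$j * ?\<Gamma> k i m))"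
    proof -
      have f1: "(\<Sum>k\<in>UNIV. a x * (if i = k then ?G$k$j else 0)) = a x * ?G$i$j"
        by (simp add: sum_distrib_left[symmetric])
      have f2: "(\<Sum>k\<in>UNIV. \<psi> x $ i * (?G$j$k * V x $ k)) = \<psi> x $ i * flat g V x $ j"
        by (simp add: sum_distrib_left[symmetric] flat_def matrix_vector_mult_def)
      have f3: "(\<Sum>k\<in>UNIV. \<Sum>m\<in>UNIV. V x $ m * (?G$k$j * ?\<Gamma> k i m))
          = (\<Sum>m\<in>UNIV. V x $ m * (\<Sum>k\<in>UNIV. ?G$k$j * ?\<Gamma> k i m))"
        by (subst sum.swap) (simp add: sum_distrib_left)
      show ?thesis by (simp only: sum_subtractf sum.distrib f1 f2 f3)
    qed
    finally show ?thesis .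
  qed
  have "lie_metric g V x $ i $ j = (\<Sum>k\<in>UNIV. V x $ k * ?D k i j) + (\<Sum>k\<in>UNIV. ?G$k$j * ?P i k)
      + (\<Sum>k\<in>UNIV. ?G$k$i * ?P j k)"
    by (simp add: lie_metric_def sum.distrib Gsym[of i])
  also have "\<dots> = 2 * a x * g x $ i $ j
            + \<psi> x $ i * flat g V x $ j + \<psi> x $ j * flat g V x $ i
            + ((\<Sum>k\<in>UNIV. V x $ k * ?D k i j) - (\<Sum>m\<in>UNIV. V x $ m * (?D m i j)))"
  proof -
    have Dm: "1/2 * (?D i m j + ?D m i j - ?D j i m) + 1/2 * (?D j m i + ?D m j i - ?D i j m) = ?D m i j" for m
      using Dsym[of i m j] Dsym[of j i m] Dsym[of m i j] by (simp add: field_simps)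
    have E: "(\<Sum>m\<in>UNIV. V x $ m * (1/2 * (?D i m j + ?D m i j - ?D j i m)))
        + (\<Sum>m\<in>UNIV. V x $ m * (1/2 * (?D j m i + ?D m j i - ?D i j m))) = (\<Sum>m\<in>UNIV. V x $ m * ?D m i j)"
      unfolding sum.distrib[symmetric]
    proof (rule sum.cong[OF refl])
      fix m
      have "V x $ m * (1/2 * (?D i m j + ?D m i j - ?D j i m)) + V x $ m * (1/2 * (?D j m i + ?D m j i - ?D i j m))
         = V x $ m * (1/2 * (?D i m j + ?D m i j - ?D j i m) + 1/2 * (?D j m i + ?D m j i - ?D i j m))"
        by (rule distrib_left[symmetric])
      also have "\<dots> = V x $ m * ?D m i j" by (simp only: Dm)
      finally show "V x $ m * (1/2 * (?D i m j + ?D m i j - ?D j i m)) + V x $ m * (1/2 * (?D j m i + ?D m j i - ?D i j m))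
         = V x $ m * ?D m i j" .
    qed
    have A2: "a x * g x $ i $ j + a x * g x $ j $ i = 2 * a x * g x $ i $ j" using Gsym[of i j] by simp
    show ?thesis unfolding S1 B using E A2 by linarith
  qed
  finally show ?thesis by simp
qed

lemma bil_sym:
  fixes H :: "real^'n::finite^'n"
  assumes "transpose H = H"
  shows "u \<bullet> (H *v w) = w \<bullet> (H *v u)"
proof -
  have Hs: "H$i$j = H$j$i" for i j using assms by (metis transpose_def vec_lambda_beta)
  have "u \<bullet> (H *v w) = (\<Sum>i\<in>UNIV. \<Sum>j\<in>UNIV. u$i * (H$i$j * w$j))"
    by (simp add: inner_vec_def matrix_vector_mult_def sum_distrib_left)
  also have "\<dots> = (\<Sum>j\<in>UNIV. \<Sum>i\<in>UNIV. u$i * (H$i$j * w$j))" by (rule sum.swap)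
  also have "\<dots> = w \<bullet> (H *v u)"
    by (simp add: inner_vec_def matrix_vector_mult_def sum_distrib_left Hs mult_ac)
  finally show ?thesis .
qed

theorem mainTheorem10:
  fixes U :: "(real^'n::finite) set"
    and g :: "real^'n \<Rightarrow> real^'n^'n"
    and V \<psi> :: "real^'n \<Rightarrow> real^'n"
    and a \<alpha> \<beta> \<gamma> lam \<mu> :: "real^'n \<Rightarrow> real"
  assumes "open U"
    and "riemannian_metric U g"
    and "torqued U g V a \<psi>"
    and "mixed_gen_quasi_einstein U g"
    and "smooth_fun U \<alpha>" and "smooth_fun U \<beta>" and "smooth_fun U \<gamma>"
    and "\<forall>x\<in>U. \<forall>i j. ricci g i j x = \<alpha> x * g x $ i $ j
           + \<beta> x * (flat g V x $ i * flat g V x $ j)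
           + \<gamma> x * (flat g V x $ i * \<psi> x $ j + \<psi> x $ i * flat g V x $ j)"
    and "almost_eta_yamabe U g (flat g V) V lam \<mu>"
  shows "\<forall>x\<in>U. lam x = (\<beta> x + \<mu> x / real CARD('n)) * (V x \<bullet> (g x *v V x))
                     + \<alpha> x * real CARD('n) - a x"
proof
  fix x assume x: "x \<in> U"
  let ?G = "g x" let ?H = "ginv g x" let ?\<eta> = "flat g V x" let ?n = "real CARD('n)"
  have lc: "\<forall>v. levi_civita g V x v = a x *\<^sub>R v + (\<psi> x \<bullet> v) *\<^sub>R V x"
    and pV: "\<psi> x \<bullet> V x = 0" using assms(3) x unfolding torqued_def by auto
  have Gs: "transpose ?G = ?G" using assms(2) x unfolding riemannian_metric_def by blast
  have pdef: "\<forall>v. v \<noteq> 0 \<longrightarrow> v \<bullet> (?G *v v) > 0" using assms(2) x unfolding riemannian_metric_def by blast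
  have GH: "?G ** ?H = mat 1" and HG: "?H ** ?G = mat 1"
    using posdef_inv[OF pdef] unfolding ginv_def by blast+
  have Hs: "transpose ?H = ?H" by (rule inv_sym[OF GH HG Gs])
  have Heta: "?H *v ?\<eta> = V x"
    by (simp add: flat_def matrix_vector_mul_assoc HG)
  have Q: "?\<eta> \<bullet> (?H *v ?\<eta>) = V x \<bullet> (?G *v V x)"
    by (simp only: Heta) (simp add: flat_def inner_commute)
  have P1: "\<psi> x \<bullet> (?H *v ?\<eta>) = 0" using Heta pV by simp
  have P2: "?\<eta> \<bullet> (?H *v \<psi> x) = 0" using bil_sym[OF Hs, of ?\<eta> "\<psi> x"] P1 by simp
  have ric: "ricci g i j x = \<alpha> x * ?G $ i $ j + \<beta> x * (?\<eta> $ i * ?\<eta> $ j)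
           + \<gamma> x * (?\<eta> $ i * \<psi> x $ j) + \<gamma> x * (\<psi> x $ i * ?\<eta> $ j)" for i j
    using assms(8) x by (simp add: algebra_simps)
  have sc: "scal g x = \<alpha> x * ?n + \<beta> x * (V x \<bullet> (?G *v V x))"
    unfolding scal_def ric trace_comb[OF HG Gs] using Q P1 P2 by simp
  have sol: "(scal g x - lam x) * ?G $ i $ j + \<mu> x * (?\<eta> $ i * ?\<eta> $ j)
      + 0 * (?\<eta> $ i * ?\<eta> $ j) + 0 * (?\<eta> $ i * ?\<eta> $ j)
     = a x * ?G $ i $ j + (1/2) * (\<psi> x $ i * ?\<eta> $ j) + (1/2) * (?\<eta> $ i * \<psi> x $ j)
      + 0 * (?\<eta> $ i * ?\<eta> $ j)" for i j
  proof -
    have "(1/2) * lie_metric g V x $ i $ j = (scal g x - lam x) * ?G $ i $ j + \<mu> x * (?\<eta> $ i * ?\<eta> $ j)"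
      using assms(9) x unfolding almost_eta_yamabe_def by blast
    then show ?thesis unfolding lie_torqued[where a=a and \<psi>=\<psi>, OF assms(1) x assms(2) lc] by (simp add: algebra_simps)
  qed
  have "(\<Sum>i\<in>UNIV. \<Sum>j\<in>UNIV. ?H$i$j * ((scal g x - lam x) * ?G $ i $ j + \<mu> x * (?\<eta> $ i * ?\<eta> $ j)
      + 0 * (?\<eta> $ i * ?\<eta> $ j) + 0 * (?\<eta> $ i * ?\<eta> $ j)))
     = (\<Sum>i\<in>UNIV. \<Sum>j\<in>UNIV. ?H$i$j * (a x * ?G $ i $ j + (1/2) * (\<psi> x $ i * ?\<eta> $ j) + (1/2) * (?\<eta> $ i * \<psi> x $ j)
      + 0 * (?\<eta> $ i * ?\<eta> $ j)))" by (simp only: sol)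
  then have tr: "(scal g x - lam x) * ?n + \<mu> x * (V x \<bullet> (?G *v V x)) = a x * ?n"
    unfolding trace_comb[OF HG Gs] using Q P1 P2 by simp
  have npos: "?n > 0" by simp
  show "lam x = (\<beta> x + \<mu> x / ?n) * (V x \<bullet> (?G *v V x)) + \<alpha> x * ?n - a x"
    using tr npos unfolding sc by (simp add: field_simps)
qed

end
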